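(* Let $\mathbb{A}\in\mathbb{C}^{n\times n}$, $\mathbf{f}_1\in\mathbb{C}^n$, $\mathbf{f}_{i+1}=\mathbb{A}\mathbf{f}_i$. Let $z_1,\dots,z_\ell\in\mathbb{C}^n$ be linearly independent, $Z_\ell=(z_1,\dots,z_\ell)=QR$ a thin QR factorization ($Q\in\mathbb{C}^{n\times\ell}$ with orthonormal columns, $R\in\mathbb{C}^{\ell\times\ell}$ upper triangular nonsingular), and let $\lambda_1,\dots,\lambda_\ell\in\mathbb{C}$. For $i=1,\dots,m$ set $\mathbf{g}_i=Q^*\mathbf{f}_i$ and $\Delta_{\Lambda_i}=\operatorname{diag}(\lambda_1^{i-1},\dots,\lambda_\ell^{i-1})$ (with $\lambda^0=1$). Let $$\vec{\mathbf{g}}=\begin{pmatrix}\mathbf{g}_1\\ \vdots\\ \mathbf{g}_m\end{pmatrix},\quad S=\begin{pmatrix}R\Delta_{\Lambda_1}\\ \vdots\\ R\Delta_{\Lambda_m}\end{pmatrix},\quad \vec{\boldsymbol\alpha}_\star=\begin{pmatrix}\Delta_{\Lambda_1}\\ \vdots\\ \Delta_{\Lambda_m}\end{pmatrix}^{\dagger}(I_m\otimes R^{-1})\vec{\mathbf{g}}.$$ Let $M=I_m\otimes(RR^* )^{-1}$ and $\|x\|_M=\sqrt{x^*Mx}$. Then $\vec{\boldsymbol\alpha}_\star$ is the minimum $\|\cdot\|_2$-norm solution of the weighted least squares problem $\min_{\vec{\boldsymbol\alpha}\in\mathbb{C}^\ell}\|\vec{\mathbf{g}}-S\vec{\bolds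ymbol\alpha}\|_M$.
   Context: $\dagger$ denotes the Moore–Penrose pseudoinverse and $\otimes$ the Kronecker product. *)

theory Defs
  imports "Jordan_Normal_Form.Matrix"
begin

definition adj :: "complex mat \<Rightarrow> complex mat" where
  "adj A = mat (dim_col A) (dim_row A) (\<lambda>(i,j). cnj (A $$ (j,i)))"

definition kron :: "complex mat \<Rightarrow> complex mat \<Rightarrow> complex mat" where
  "kron A B = mat (dim_row A * dim_row B) (dim_col A * dim_col B)
     (\<lambda>(i,j). A $$ (i div dim_row B, j div dim_col B) * B $$ (i mod dim_row B, j mod dim_col B))"

definition is_pinv :: "complex mat \<Rightarrow> complex mat \<Rightarrow> bool" where
  "is_pinv A X \<longleftrightarrow> X \<in> carrier_mat (dim_col A) (dim_row A) \<and>
     A * X * A = A \<and> X * A * X = X \<and> adj (A * X) = A * X \<and> adj (X * A) = X * A"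

definition pinv :: "complex mat \<Rightarrow> complex mat" where
  "pinv A = (THE X. is_pinv A X)"

definition minv :: "complex mat \<Rightarrow> complex mat" where
  "minv A = (THE B. B \<in> carrier_mat (dim_row A) (dim_row A) \<and> inverts_mat A B \<and> inverts_mat B A)"

definition vnorm2 :: "complex vec \<Rightarrow> real" where
  "vnorm2 x = sqrt (\<Sum>i<dim_vec x. (cmod (x $ i))^2)"

definition Mnorm :: "complex mat \<Rightarrow> complex vec \<Rightarrow> real" where
  "Mnorm M x = sqrt (Re (conjugate x \<bullet> (M *\<^sub>v x)))"

definition stack_vecs :: "nat \<Rightarrow> nat \<Rightarrow> (nat \<Rightarrow> complex vec) \<Rightarrow> complex vec" where
  "stack_vecs k d v = vec (k * d) (\<lambda>p. v (p div d) $ (p mod d))"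

definition stack_mats :: "nat \<Rightarrow> nat \<Rightarrow> nat \<Rightarrow> (nat \<Rightarrow> complex mat) \<Rightarrow> complex mat" where
  "stack_mats k r c B = mat (k * r) c (\<lambda>(p,j). B (p div r) $$ (p mod r, j))"

end

theory Submission
  imports Defs
begin

lemma sum_lessThan_add_split':
  fixes a b :: nat
  shows "(\<Sum>p<a+b. f p) = (\<Sum>p<a. f p) + (\<Sum>j<b. f (a+j))"
  by (induction b) (simp_all add: add.assoc)

lemma sum_blocks: fixes m l :: nat shows
  "(\<Sum>p<m*l. f p) = (\<Sum>k<m. \<Sum>j<l. f (k*l+j))"
proof (induction m)
  case 0 then show ?case by simp
next
  case (Suc m)
  have "(\<Sum>p<Suc m*l. f p) = (\<Sum>p<m*l + l. f p)" by (simp add: add.commute)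
  also have "\<dots> = (\<Sum>p<m*l. f p) + (\<Sum>j<l. f (m*l+j))"
    by (rule sum_lessThan_add_split')
  finally show ?case using Suc by simp
qed

lemma adj_dims[simp]: "dim_row (adj A) = dim_col A" "dim_col (adj A) = dim_row A"
  by (simp_all add: adj_def)

lemma adj_index[simp]: "i < dim_col A \<Longrightarrow> j < dim_row A \<Longrightarrow> adj A $$ (i,j) = cnj (A $$ (j,i))"
  by (simp add: adj_def)

lemma adj_carrier[simp]: "A \<in> carrier_mat n k \<Longrightarrow> adj A \<in> carrier_mat k n"
  by (rule carrier_matI) (simp_all add: carrier_matD)

lemma adj_adj[simp]: "adj (adj A) = A"
  by (rule eq_matI) (simp_all add: adj_def)

lemma adj_mult: assumes "A \<in> carrier_mat n k" "B \<in> carrier_mat k p"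
  shows "adj (A*B) = adj B * adj A"
proof (rule eq_matI)
  fix i j assume i: "i < dim_row (adj B * adj A)" and j: "j < dim_col (adj B * adj A)"
  then have i': "i < p" and j': "j < n" using assms by auto
  have "adj (A*B) $$ (i,j) = cnj (\<Sum>q<k. A $$ (j,q) * B $$ (q,i))"
    using assms i' j' by (simp add: scalar_prod_def atLeast0LessThan)
  also have "\<dots> = (\<Sum>q<k. cnj (B $$ (q,i)) * cnj (A $$ (j,q)))"
    by (simp add: mult.commute)
  also have "\<dots> = (adj B * adj A) $$ (i,j)"
    using assms i' j' by (simp add: scalar_prod_def atLeast0LessThan)
  finally show "adj (A*B) $$ (i,j) = (adj B * adj A) $$ (i,j)" .
qed (use assms in auto)

lemma adj_one[simp]: "adj (1\<^sub>m n) = 1\<^sub>m n"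
  by (rule eq_matI) auto

lemma adj_diag_real: "adj (mat_diag n (\<lambda>i. complex_of_real (f i))) = mat_diag n (\<lambda>i. complex_of_real (f i))"
  by (rule eq_matI) (auto simp: mat_diag_def)

lemma minv_unique: assumes R: "R \<in> carrier_mat l l" and B: "B \<in> carrier_mat l l"
  and RB: "R * B = 1\<^sub>m l" and BR: "B * R = 1\<^sub>m l"
  shows "minv R = B"
  unfolding minv_def
proof (rule the_equality)
  show "B \<in> carrier_mat (dim_row R) (dim_row R) \<and> inverts_mat R B \<and> inverts_mat B R"
    using R B RB BR by (auto simp: inverts_mat_def)
next
  fix C assume C: "C \<in> carrier_mat (dim_row R) (dim_row R) \<and> inverts_mat R C \<and> inverts_mat C R"
  then have C1: "C \<in> carrier_mat l l" "R * C = 1\<^sub>m l" "C * R = 1\<^sub>m l" using R by (auto simp: inverts_mat_def)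
  have "C = C * (R * B)" using C1 RB by (simp add: right_mult_one_mat)
  also have "\<dots> = (C * R) * B" by (simp only: assoc_mult_mat[OF C1(1) R B])
  also have "\<dots> = B" unfolding C1(3) using B by (simp add: left_mult_one_mat)
  finally show "C = B" .
qed

lemma minv_props: assumes R: "R \<in> carrier_mat l l" and inv: "invertible_mat R"
  shows "minv R \<in> carrier_mat l l \<and> R * minv R = 1\<^sub>m l \<and> minv R * R = 1\<^sub>m l"
proof -
  obtain B where B: "inverts_mat R B" "inverts_mat B R" using inv unfolding invertible_mat_def by blast
  have RB: "R * B = 1\<^sub>m l" using B R by (simp add: inverts_mat_def)
  then have "dim_col B = l" by (metis index_mult_mat(3) index_one_mat(3))
  moreover have "B * R = 1\<^sub>m (dim_row B)" using B by (simp add: inverts_mat_def)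
  ultimately have "dim_row B = l" using R by (metis carrier_matD(2) index_mult_mat(3) index_one_mat(3))
  have Bc: "B \<in> carrier_mat l l" using \<open>dim_col B = l\<close> \<open>dim_row B = l\<close> by auto
  have BR: "B * R = 1\<^sub>m l" using B \<open>dim_row B = l\<close> by (simp add: inverts_mat_def)
  have "minv R = B" by (rule minv_unique[OF R Bc RB BR])
  then show ?thesis using Bc RB BR by simp
qed

lemma stack_vecs_dim[simp]: "dim_vec (stack_vecs k d v) = k * d"
  by (simp add: stack_vecs_def)
lemma stack_vecs_carrier[simp]: "stack_vecs k d v \<in> carrier_vec (k * d)"
  by (simp add: stack_vecs_def)
lemma stack_vecs_index[simp]: "p < k * d \<Longrightarrow> stack_vecs k d v $ p = v (p div d) $ (p mod d)"
  by (simp add: stack_vecs_def)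
lemma stack_mats_dims[simp]: "dim_row (stack_mats k r c B) = k * r" "dim_col (stack_mats k r c B) = c"
  by (simp_all add: stack_mats_def)
lemma stack_mats_carrier[simp]: "stack_mats k r c B \<in> carrier_mat (k * r) c"
  by (simp add: stack_mats_def)
lemma stack_mats_index[simp]: "p < k * r \<Longrightarrow> j < c \<Longrightarrow> stack_mats k r c B $$ (p,j) = B (p div r) $$ (p mod r, j)"
  by (simp add: stack_mats_def)

lemma div_mod_bounds: fixes p k d :: nat assumes "p < k * d" shows "p div d < k" "p mod d < d"
  using assms by (auto simp: less_mult_imp_div_less) (metis mod_less_divisor mult_0_right neq0_conv not_less0)

lemma stack_mats_mult_vec:
  assumes B: "\<And>i. i < k \<Longrightarrow> B i \<in> carrier_mat r c" and a: "a \<in> carrier_vec c"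
  shows "stack_mats k r c B *\<^sub>v a = stack_vecs k r (\<lambda>i. B i *\<^sub>v a)"
proof (rule eq_vecI)
  fix p assume "p < dim_vec (stack_vecs k r (\<lambda>i. B i *\<^sub>v a))"
  then have p: "p < k * r" by simp
  note pb = div_mod_bounds[OF p]
  have Bp: "B (p div r) \<in> carrier_mat r c" using B pb by auto
  show "(stack_mats k r c B *\<^sub>v a) $ p = stack_vecs k r (\<lambda>i. B i *\<^sub>v a) $ p"
    using p pb Bp a by (simp add: scalar_prod_def)
qed simp

lemma stack_vecs_minus:
  assumes "\<And>i. i < k \<Longrightarrow> u i \<in> carrier_vec d" "\<And>i. i < k \<Longrightarrow> v i \<in> carrier_vec d"
  shows "stack_vecs k d u - stack_vecs k d v = stack_vecs k d (\<lambda>i. u i - v i)"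
proof (rule eq_vecI)
  fix p assume "p < dim_vec (stack_vecs k d (\<lambda>i. u i - v i))"
  then have p: "p < k * d" by simp
  note pb = div_mod_bounds[OF p]
  show "(stack_vecs k d u - stack_vecs k d v) $ p = stack_vecs k d (\<lambda>i. u i - v i) $ p"
    using p pb assms[of "p div d"] by simp
qed simp

lemma kron_dims[simp]: "dim_row (kron A B) = dim_row A * dim_row B" "dim_col (kron A B) = dim_col A * dim_col B"
  by (simp_all add: kron_def)

lemma kron_index: "i < dim_row A * dim_row B \<Longrightarrow> j < dim_col A * dim_col B \<Longrightarrow>
  kron A B $$ (i,j) = A $$ (i div dim_row B, j div dim_col B) * B $$ (i mod dim_row B, j mod dim_col B)"
  by (simp add: kron_def)

lemma kron_stack:
  assumes W: "W \<in> carrier_mat l l" and xs: "\<And>k. k < m \<Longrightarrow> xs k \<in> carrier_vec l"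
  shows "kron (1\<^sub>m m) W *\<^sub>v stack_vecs m l xs = stack_vecs m l (\<lambda>k. W *\<^sub>v xs k)"
proof (rule eq_vecI)
  fix p assume "p < dim_vec (stack_vecs m l (\<lambda>k. W *\<^sub>v xs k))"
  then have p: "p < m * l" by simp
  note pb = div_mod_bounds[OF p]
  have dk: "dim_row (kron (1\<^sub>m m) W) = m * l" "dim_col (kron (1\<^sub>m m) W) = m * l"
    using W by auto
  have "(kron (1\<^sub>m m) W *\<^sub>v stack_vecs m l xs) $ p
      = (\<Sum>q<m*l. kron (1\<^sub>m m) W $$ (p,q) * stack_vecs m l xs $ q)"
    using p W by (simp add: scalar_prod_def atLeast0LessThan)
  also have "\<dots> = (\<Sum>k<m. \<Sum>j<l. kron (1\<^sub>m m) W $$ (p,k*l+j) * stack_vecs m l xs $ (k*l+j))"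
    by (rule sum_blocks)
  also have "\<dots> = (\<Sum>k<m. \<Sum>j<l. (if p div l = k then W $$ (p mod l, j) * xs k $ j else 0))"
  proof (intro sum.cong refl)
    fix k j assume k: "k \<in> {..<m}" and j: "j \<in> {..<l}"
    have q: "k*l+j < m*l" using k j
      by (metis lessThan_iff add.commute add_less_cancel_left mult.commute mult_Suc_right less_eq_Suc_le
           order_less_le_trans mult_le_mono2)
    have qd: "(k*l+j) div l = k" "(k*l+j) mod l = j" using j by auto
    show "kron (1\<^sub>m m) W $$ (p,k*l+j) * stack_vecs m l xs $ (k*l+j) = (if p div l = k then W $$ (p mod l, j) * xs k $ j else 0)"
      using p q qd W pb k by (simp add: kron_index)
  qed
  also have "\<dots> = (\<Sum>j<l. W $$ (p mod l, j) * xs (p div l) $ j)"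
  proof -
    have "\<And>k. (\<Sum>j<l. (if p div l = k then W $$ (p mod l, j) * xs k $ j else 0))
       = (if p div l = k then (\<Sum>j<l. W $$ (p mod l, j) * xs k $ j) else 0)" by simp
    then show ?thesis using pb by (simp add: sum.delta')
  qed
  also have "\<dots> = stack_vecs m l (\<lambda>k. W *\<^sub>v xs k) $ p"
    using p pb W xs[of "p div l"] by (simp add: scalar_prod_def atLeast0LessThan)
  finally show "(kron (1\<^sub>m m) W *\<^sub>v stack_vecs m l xs) $ p = stack_vecs m l (\<lambda>k. W *\<^sub>v xs k) $ p" .
qed (use W in \<open>simp add: kron_dims\<close>)

lemma stack_inner:
  assumes "\<And>k. k < m \<Longrightarrow> xs k \<in> carrier_vec l" "\<And>k. k < m \<Longrightarrow> ys k \<in> carrier_vec l"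
  shows "conjugate (stack_vecs m l xs) \<bullet> stack_vecs m l ys = (\<Sum>k<m. conjugate (xs k) \<bullet> ys k)"
proof -
  have "conjugate (stack_vecs m l xs) \<bullet> stack_vecs m l ys = (\<Sum>p<m*l. cnj (stack_vecs m l xs $ p) * stack_vecs m l ys $ p)"
    by (simp add: scalar_prod_def atLeast0LessThan)
  also have "\<dots> = (\<Sum>k<m. \<Sum>j<l. cnj (stack_vecs m l xs $ (k*l+j)) * stack_vecs m l ys $ (k*l+j))"
    by (rule sum_blocks)
  also have "\<dots> = (\<Sum>k<m. conjugate (xs k) \<bullet> ys k)"
  proof (intro sum.cong refl)
    fix k assume k: "k \<in> {..<m}"
    have q: "\<And>j. j < l \<Longrightarrow> k*l+j < m*l" using k
      by (metis lessThan_iff add.commute add_less_cancel_left mult.commute mult_Suc_right less_eq_Suc_le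
           order_less_le_trans mult_le_mono2)
    show "(\<Sum>j<l. cnj (stack_vecs m l xs $ (k*l+j)) * stack_vecs m l ys $ (k*l+j)) = conjugate (xs k) \<bullet> ys k"
      using q assms[of k] k by (simp add: scalar_prod_def atLeast0LessThan)
  qed
  finally show ?thesis .
qed

lemma adj_inner:
  assumes B: "B \<in> carrier_mat r c" and y: "y \<in> carrier_vec c" and w: "w \<in> carrier_vec r"
  shows "conjugate y \<bullet> (adj B *\<^sub>v w) = conjugate (B *\<^sub>v y) \<bullet> w"
proof -
  have "conjugate y \<bullet> (adj B *\<^sub>v w) = (\<Sum>i<c. cnj (y $ i) * (\<Sum>j<r. cnj (B $$ (j,i)) * w $ j))"
    using assms by (simp add: scalar_prod_def atLeast0LessThan)
  also have "\<dots> = (\<Sum>j<r. \<Sum>i<c. cnj (y $ i) * cnj (B $$ (j,i)) * w $ j)"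
    by (simp add: sum_distrib_left sum.swap[of _ "{..<c}"] mult.assoc)
  also have "\<dots> = (\<Sum>j<r. cnj (\<Sum>i<c. B $$ (j,i) * y $ i) * w $ j)"
    by (intro sum.cong refl) (simp add: sum_distrib_left sum_distrib_right mult_ac)
  also have "\<dots> = conjugate (B *\<^sub>v y) \<bullet> w"
    using assms by (simp add: scalar_prod_def atLeast0LessThan)
  finally show ?thesis .
qed

lemma conj_self: "conjugate v \<bullet> v = complex_of_real (\<Sum>j<dim_vec v. (cmod (v $ j))^2)"
  unfolding of_real_sum
  by (simp add: scalar_prod_def atLeast0LessThan complex_norm_square mult.commute del: of_real_power)

lemma ls_scalar:
  fixes hh v :: "nat \<Rightarrow> complex" and K :: "nat set" and c :: real
  assumes c: "c = (\<Sum>k\<in>K. (cmod (v k))^2)"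
    and cs: "complex_of_real c * s = (\<Sum>k\<in>K. cnj (v k) * hh k)"
  shows "(\<Sum>k\<in>K. (cmod (hh k - v k * t))^2) = (\<Sum>k\<in>K. (cmod (hh k - v k * s))^2) + c * (cmod (t - s))^2"
proof -
  define r where "r k = hh k - v k * s" for k
  define d where "d = t - s"
  have vv: "(\<Sum>k\<in>K. v k * cnj (v k)) = complex_of_real c"
    unfolding c of_real_sum by (simp add: complex_norm_square del: of_real_power)
  have E1: "(\<Sum>k\<in>K. cnj (v k) * r k) = 0"
  proof -
    have "(\<Sum>k\<in>K. cnj (v k) * r k) = (\<Sum>k\<in>K. cnj (v k) * hh k - (v k * cnj (v k)) * s)"
      by (intro sum.cong refl) (simp add: r_def algebra_simps)
    also have "\<dots> = (\<Sum>k\<in>K. cnj (v k) * hh k) - (\<Sum>k\<in>K. v k * cnj (v k)) * s"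
      by (simp only: sum_subtractf sum_distrib_right)
    finally show ?thesis using cs vv by simp
  qed
  have E2: "(\<Sum>k\<in>K. v k * cnj (r k)) = 0"
  proof -
    have "cnj (\<Sum>k\<in>K. cnj (v k) * r k) = 0" using E1 by simp
    then show ?thesis by (simp add: cnj_sum)
  qed
  have tm: "hh k - v k * t = r k - v k * d" for k by (simp add: r_def d_def algebra_simps)
  have "complex_of_real (\<Sum>k\<in>K. (cmod (hh k - v k * t))^2)
      = (\<Sum>k\<in>K. (r k - v k * d) * cnj (r k - v k * d))"
    unfolding of_real_sum tm by (simp add: complex_norm_square del: of_real_power)
  also have "\<dots> = (\<Sum>k\<in>K. r k * cnj (r k) - cnj d * (cnj (v k) * r k) - d * (v k * cnj (r k))
        + (v k * cnj (v k)) * (d * cnj d))"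
    by (intro sum.cong refl) (simp add: algebra_simps)
  also have "\<dots> = (\<Sum>k\<in>K. r k * cnj (r k)) - cnj d * (\<Sum>k\<in>K. cnj (v k) * r k) - d * (\<Sum>k\<in>K. v k * cnj (r k))
        + (\<Sum>k\<in>K. v k * cnj (v k)) * (d * cnj d)"
    by (simp only: sum.distrib sum_subtractf sum_distrib_left sum_distrib_right)
  also have "\<dots> = complex_of_real ((\<Sum>k\<in>K. (cmod (r k))^2) + c * (cmod d)^2)"
    unfolding E1 E2 vv of_real_sum of_real_add of_real_mult
    by (simp add: complex_norm_square del: of_real_power)
  finally show ?thesis unfolding r_def d_def of_real_eq_iff .
qed

definition Dm :: "nat \<Rightarrow> nat \<Rightarrow> (nat \<Rightarrow> complex) \<Rightarrow> complex mat" where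
  "Dm m l lam = stack_mats m l l (\<lambda>k. mat_diag l (\<lambda>j. lam j ^ k))"

lemma Dm_dims[simp]: "dim_row (Dm m l lam) = m*l" "dim_col (Dm m l lam) = l"
  by (simp_all add: Dm_def)

lemma Dm_carrier[simp]: "Dm m l lam \<in> carrier_mat (m*l) l"
  by (simp add: Dm_def)

lemma Dm_index: assumes "p < m*l" "j < l"
  shows "Dm m l lam $$ (p,j) = (if p mod l = j then lam j ^ (p div l) else 0)"
proof -
  have "p mod l < l" using div_mod_bounds[OF assms(1)] by simp
  then show ?thesis using assms by (simp add: Dm_def mat_diag_def)
qed

lemma blk_bound: fixes k j m l :: nat assumes "k < m" "j < l" shows "k*l+j < m*l"
proof -
  have "k*l+j < k*l + l" using assms by simp
  also have "\<dots> = Suc k * l" by simp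
  also have "\<dots> \<le> m * l" using assms by (intro mult_le_mono1) simp
  finally show ?thesis .
qed

lemma mat_diag_mult_vec_index: assumes "v \<in> carrier_vec n" "j < n"
  shows "(mat_diag n f *\<^sub>v v) $ j = f j * v $ j"
proof -
  have "(mat_diag n f *\<^sub>v v) $ j = (\<Sum>i<n. (if j = i then f i else 0) * v $ i)"
    using assms by (simp add: mat_diag_def scalar_prod_def atLeast0LessThan)
  also have "\<dots> = (\<Sum>i<n. (if j = i then f i * v $ i else 0))"
    by (intro sum.cong refl) simp
  also have "\<dots> = f j * v $ j" using assms(2) by (simp add: sum.delta)
  finally show ?thesis .
qed

lemma adjD_mult_vec: assumes h: "\<And>k. k < m \<Longrightarrow> h k \<in> carrier_vec l" and j: "j < l"
  shows "(adj (Dm m l lam) *\<^sub>v stack_vecs m l h) $ j = (\<Sum>k<m. cnj (lam j ^ k) * h k $ j)"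
proof -
  have "(adj (Dm m l lam) *\<^sub>v stack_vecs m l h) $ j = (\<Sum>p<m*l. cnj (Dm m l lam $$ (p,j)) * stack_vecs m l h $ p)"
    using j by (simp add: scalar_prod_def atLeast0LessThan)
  also have "\<dots> = (\<Sum>k<m. \<Sum>i<l. cnj (Dm m l lam $$ (k*l+i,j)) * stack_vecs m l h $ (k*l+i))"
    by (rule sum_blocks)
  also have "\<dots> = (\<Sum>k<m. \<Sum>i<l. (if i = j then cnj (lam j ^ k) * h k $ j else 0))"
  proof (intro sum.cong refl)
    fix k i assume k: "k \<in> {..<m}" and i: "i \<in> {..<l}"
    have q: "k*l+i < m*l" using k i blk_bound by auto
    have qd: "(k*l+i) div l = k" "(k*l+i) mod l = i" using i by auto
    show "cnj (Dm m l lam $$ (k*l+i,j)) * stack_vecs m l h $ (k*l+i) = (if i = j then cnj (lam j ^ k) * h k $ j else 0)"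
      using q qd j by (simp add: Dm_index)
  qed
  also have "\<dots> = (\<Sum>k<m. cnj (lam j ^ k) * h k $ j)"
    using j by (simp add: sum.delta')
  finally show ?thesis .
qed

lemma adjDD: "adj (Dm m l lam) * Dm m l lam = mat_diag l (\<lambda>j. complex_of_real (\<Sum>k<m. (cmod (lam j ^ k))^2))"
proof (rule eq_matI)
  fix i j assume "i < dim_row (mat_diag l (\<lambda>j. complex_of_real (\<Sum>k<m. (cmod (lam j ^ k))^2)))"
    "j < dim_col (mat_diag l (\<lambda>j. complex_of_real (\<Sum>k<m. (cmod (lam j ^ k))^2)))"
  then have i: "i < l" and j: "j < l" by (simp_all add: mat_diag_def)
  have "(adj (Dm m l lam) * Dm m l lam) $$ (i,j) = (\<Sum>p<m*l. cnj (Dm m l lam $$ (p,i)) * Dm m l lam $$ (p,j))"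
    using i j by (simp add: scalar_prod_def atLeast0LessThan)
  also have "\<dots> = (\<Sum>k<m. \<Sum>r<l. cnj (Dm m l lam $$ (k*l+r,i)) * Dm m l lam $$ (k*l+r,j))"
    by (rule sum_blocks)
  also have "\<dots> = (\<Sum>k<m. \<Sum>r<l. (if r = i then (if i = j then complex_of_real ((cmod (lam j ^ k))^2) else 0) else 0))"
  proof (intro sum.cong refl)
    fix k r assume k: "k \<in> {..<m}" and r: "r \<in> {..<l}"
    have q: "k*l+r < m*l" using k r blk_bound by auto
    have qd: "(k*l+r) div l = k" "(k*l+r) mod l = r" using r by auto
    show "cnj (Dm m l lam $$ (k*l+r,i)) * Dm m l lam $$ (k*l+r,j) = (if r = i then (if i = j then complex_of_real ((cmod (lam j ^ k))^2) else 0) else 0)"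
      using q qd i j by (simp add: Dm_index complex_norm_square del: of_real_power)
  qed
  also have "\<dots> = (\<Sum>k<m. (if i = j then complex_of_real ((cmod (lam j ^ k))^2) else 0))"
    using i by (simp add: sum.delta')
  also have "\<dots> = mat_diag l (\<lambda>j. complex_of_real (\<Sum>k<m. (cmod (lam j ^ k))^2)) $$ (i,j)"
    using i j by (simp add: mat_diag_def of_real_sum)
  finally show "(adj (Dm m l lam) * Dm m l lam) $$ (i,j) = mat_diag l (\<lambda>j. complex_of_real (\<Sum>k<m. (cmod (lam j ^ k))^2)) $$ (i,j)" .
qed (simp_all add: mat_diag_def)

definition cD :: "nat \<Rightarrow> (nat \<Rightarrow> complex) \<Rightarrow> nat \<Rightarrow> real" where
  "cD m lam j = (\<Sum>k<m. (cmod (lam j ^ k))^2)"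

lemma cD_ge1: assumes "m > 0" shows "cD m lam j \<ge> 1"
proof -
  have "(\<lambda>k. (cmod (lam j ^ k))^2) 0 \<le> (\<Sum>k<m. (cmod (lam j ^ k))^2)"
    by (rule member_le_sum) (use assms in auto)
  then show ?thesis by (simp add: cD_def)
qed

lemma adjDD': "adj (Dm m l lam) * Dm m l lam = mat_diag l (\<lambda>j. complex_of_real (cD m lam j))"
  unfolding cD_def by (rule adjDD)

lemma pinv_intro: "is_pinv A X \<Longrightarrow> (\<And>Y. is_pinv A Y \<Longrightarrow> Y = X) \<Longrightarrow> pinv A = X"
  unfolding pinv_def by (rule the_equality)

lemma pinv_Dm_pos: assumes m: "m > 0"
  shows "pinv (Dm m l lam) = mat_diag l (\<lambda>j. complex_of_real (1 / cD m lam j)) * adj (Dm m l lam)"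
proof -
  define D where "D = Dm m l lam"
  define Dg where "Dg = mat_diag l (\<lambda>j. complex_of_real (1 / cD m lam j))"
  define X where "X = Dg * adj D"
  have Dc: "D \<in> carrier_mat (m*l) l" by (simp add: D_def)
  have Dgc: "Dg \<in> carrier_mat l l" by (simp add: Dg_def)
  have aDc: "adj D \<in> carrier_mat l (m*l)" using Dc by simp
  have Xc: "X \<in> carrier_mat l (m*l)" using Dgc aDc by (simp add: X_def)
  have cnz: "cD m lam j \<noteq> 0" for j using cD_ge1[OF m, of lam j] by simp
  have XD: "X * D = 1\<^sub>m l"
  proof -
    have "X * D = Dg * (adj D * D)" unfolding X_def by (rule assoc_mult_mat[OF Dgc aDc Dc])
    also have "\<dots> = mat_diag l (\<lambda>j. complex_of_real (1 / cD m lam j) * complex_of_real (cD m lam j))"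
      unfolding D_def adjDD' Dg_def by simp
    also have "\<dots> = mat_diag l (\<lambda>j. 1)"
      by (rule arg_cong[where f="mat_diag l"]) (use cnz in \<open>auto simp flip: of_real_mult\<close>)
    finally show ?thesis by simp
  qed
  have adjDg: "adj Dg = Dg" unfolding Dg_def by (rule adj_diag_real)
  have DX: "adj (D * X) = D * X"
  proof -
    have "adj (D * X) = adj X * adj D" by (rule adj_mult[OF Dc Xc])
    also have "adj X = D * Dg" unfolding X_def adj_mult[OF Dgc aDc] adjDg by simp
    also have "D * Dg * adj D = D * X" unfolding X_def by (rule assoc_mult_mat[OF Dc Dgc aDc])
    finally show ?thesis .
  qed
  have P: "is_pinv D X"
    unfolding is_pinv_def
  proof (intro conjI)
    show "X \<in> carrier_mat (dim_col D) (dim_row D)" using Xc Dc by simp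
    show "D * X * D = D" unfolding assoc_mult_mat[OF Dc Xc Dc] XD using Dc by (simp add: right_mult_one_mat)
    show "X * D * X = X" unfolding XD using Xc by (simp add: left_mult_one_mat)
    show "adj (D * X) = D * X" by (rule DX)
    show "adj (X * D) = X * D" unfolding XD by simp
  qed
  have U: "Y = X" if Y: "is_pinv D Y" for Y
  proof -
    have Yc: "Y \<in> carrier_mat l (m*l)" and Y1: "D * Y * D = D" and Y4: "adj (D * Y) = D * Y"
      using Y Dc unfolding is_pinv_def by auto
    have DYc: "D * Y \<in> carrier_mat (m*l) (m*l)" using Dc Yc by simp
    have "adj D = adj (D * Y * D)" using Y1 by simp
    also have "\<dots> = adj D * adj (D * Y)" by (rule adj_mult[OF DYc Dc])
    also have "\<dots> = adj D * (D * Y)" unfolding Y4 ..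
    finally have aD: "adj D = adj D * (D * Y)" .
    have "X = Dg * (adj D * (D * Y))" unfolding X_def using aD by simp
    also have "\<dots> = Dg * ((adj D * D) * Y)" using assoc_mult_mat[OF aDc Dc Yc] by simp
    also have "\<dots> = (Dg * (adj D * D)) * Y" using assoc_mult_mat[OF Dgc _ Yc, of "adj D * D"] aDc Dc by simp
    also have "Dg * (adj D * D) = X * D" unfolding X_def by (rule assoc_mult_mat[OF Dgc aDc Dc, symmetric])
    finally show "Y = X" using XD Yc by (simp add: left_mult_one_mat)
  qed
  show ?thesis using pinv_intro[OF P U] by (simp add: D_def X_def Dg_def)
qed

lemma pinv_Dm_zero: "pinv (Dm 0 l lam) = 0\<^sub>m l 0"
proof (rule pinv_intro)
  have Dc: "Dm 0 l lam \<in> carrier_mat 0 l" using Dm_carrier[of 0 l lam] by simp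
  show "is_pinv (Dm 0 l lam) (0\<^sub>m l 0)"
    unfolding is_pinv_def
  proof (intro conjI)
    show "0\<^sub>m l 0 \<in> carrier_mat (dim_col (Dm 0 l lam)) (dim_row (Dm 0 l lam))" by simp
    show "Dm 0 l lam * 0\<^sub>m l 0 * Dm 0 l lam = Dm 0 l lam" by (rule eq_matI) auto
    show "0\<^sub>m l 0 * Dm 0 l lam * 0\<^sub>m l 0 = 0\<^sub>m l 0" by (rule eq_matI) auto
    show "adj (Dm 0 l lam * 0\<^sub>m l 0) = Dm 0 l lam * 0\<^sub>m l 0" by (rule eq_matI) auto
    show "adj (0\<^sub>m l 0 * Dm 0 l lam) = 0\<^sub>m l 0 * Dm 0 l lam"
      by (rule eq_matI) (auto simp: scalar_prod_def)
  qed
  fix Y assume "is_pinv (Dm 0 l lam) Y"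
  then have "Y \<in> carrier_mat l 0" unfolding is_pinv_def by simp
  then show "Y = 0\<^sub>m l 0" by (intro eq_matI) auto
qed

lemma vnorm2_zero: "vnorm2 (0\<^sub>v l) = 0"
  by (simp add: vnorm2_def)

lemma vnorm2_pos: assumes b: "b \<in> carrier_vec l" and nz: "b \<noteq> 0\<^sub>v l" shows "vnorm2 b > 0"
proof -
  obtain j where j: "j < l" "b $ j \<noteq> 0"
    using b nz by (metis carrier_vecD eq_vecI index_zero_vec(1) index_zero_vec(2))
  have "0 < (cmod (b $ j))^2" using j by simp
  also have "\<dots> \<le> (\<Sum>i<dim_vec b. (cmod (b $ i))^2)"
    by (rule member_le_sum[where f="\<lambda>i. (cmod (b $ i))^2"]) (use j b in auto)
  finally show ?thesis unfolding vnorm2_def by simp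
qed

lemma minv_RadjR: assumes R: "R \<in> carrier_mat l l" and Rinv: "invertible_mat R"
  shows "minv (R * adj R) = adj (minv R) * minv R"
proof -
  define Ri where "Ri = minv R"
  have Ric: "Ri \<in> carrier_mat l l" and RRi: "R * Ri = 1\<^sub>m l" and RiR: "Ri * R = 1\<^sub>m l"
    using minv_props[OF R Rinv] by (auto simp: Ri_def)
  have aR: "adj R \<in> carrier_mat l l" and aRi: "adj Ri \<in> carrier_mat l l" using R Ric by auto
  have e1: "adj R * adj Ri = 1\<^sub>m l" using adj_mult[OF Ric R] RiR by simp
  have e2: "adj Ri * adj R = 1\<^sub>m l" using adj_mult[OF R Ric] RRi by simp
  have "(R * adj R) * (adj Ri * Ri) = R * (adj R * (adj Ri * Ri))"
    by (rule assoc_mult_mat[OF R aR mult_carrier_mat[OF aRi Ric]])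
  also have "adj R * (adj Ri * Ri) = (adj R * adj Ri) * Ri"
    by (rule assoc_mult_mat[OF aR aRi Ric, symmetric])
  also have "\<dots> = Ri" using e1 Ric by (simp add: left_mult_one_mat)
  finally have i1: "(R * adj R) * (adj Ri * Ri) = 1\<^sub>m l" using RRi by simp
  have "(adj Ri * Ri) * (R * adj R) = adj Ri * (Ri * (R * adj R))"
    by (rule assoc_mult_mat[OF aRi Ric mult_carrier_mat[OF R aR]])
  also have "Ri * (R * adj R) = (Ri * R) * adj R"
    by (rule assoc_mult_mat[OF Ric R aR, symmetric])
  also have "\<dots> = adj R" using RiR aR by (simp add: left_mult_one_mat)
  finally have i2: "(adj Ri * Ri) * (R * adj R) = 1\<^sub>m l" using e2 by simp
  show ?thesis unfolding Ri_def[symmetric]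
    by (rule minv_unique[OF _ _ i1 i2]) (use R aR aRi Ric in auto)
qed

lemma core:
  fixes m l :: nat and R :: "complex mat" and lam :: "nat \<Rightarrow> complex" and g :: "nat \<Rightarrow> complex vec"
  assumes R: "R \<in> carrier_mat l l" and Rinv: "invertible_mat R"
    and g: "\<And>k. k < m \<Longrightarrow> g k \<in> carrier_vec l"
  defines "gv \<equiv> stack_vecs m l g"
    and "S \<equiv> stack_mats m l l (\<lambda>k. R * mat_diag l (\<lambda>j. lam j ^ k))"
    and "alpha \<equiv> pinv (stack_mats m l l (\<lambda>k. mat_diag l (\<lambda>j. lam j ^ k)))
                   *\<^sub>v (kron (1\<^sub>m m) (minv R) *\<^sub>v stack_vecs m l g)"
    and "M \<equiv> kron (1\<^sub>m m) (minv (R * adj R))"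
  shows "alpha \<in> carrier_vec l
    \<and> (\<forall>a \<in> carrier_vec l. Mnorm M (gv - S *\<^sub>v alpha) \<le> Mnorm M (gv - S *\<^sub>v a))
    \<and> (\<forall>b \<in> carrier_vec l.
         (\<forall>a \<in> carrier_vec l. Mnorm M (gv - S *\<^sub>v b) \<le> Mnorm M (gv - S *\<^sub>v a))
         \<longrightarrow> b \<noteq> alpha \<longrightarrow> vnorm2 alpha < vnorm2 b)"
proof -
  define Ri where "Ri = minv R"
  have Ric: "Ri \<in> carrier_mat l l" and RRi: "R * Ri = 1\<^sub>m l" and RiR: "Ri * R = 1\<^sub>m l"
    using minv_props[OF R Rinv] by (auto simp: Ri_def)
  define Dl where "Dl k = mat_diag l (\<lambda>j. lam j ^ k)" for k
  have Dlc: "Dl k \<in> carrier_mat l l" for k by (simp add: Dl_def)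
  define D where "D = Dm m l lam"
  have Deq: "stack_mats m l l (\<lambda>k. mat_diag l (\<lambda>j. lam j ^ k)) = D" by (simp add: D_def Dm_def)
  define h where "h k = Ri *\<^sub>v g k" for k
  have hc: "h k \<in> carrier_vec l" if "k < m" for k using g[OF that] Ric by (simp add: h_def)
  have hv: "kron (1\<^sub>m m) (minv R) *\<^sub>v stack_vecs m l g = stack_vecs m l h"
    unfolding Ri_def[symmetric] h_def by (rule kron_stack[OF Ric g])
  have alpha_eq: "alpha = pinv D *\<^sub>v stack_vecs m l h" unfolding alpha_def Deq hv ..
  define W where "W = adj Ri * Ri"
  have Wc: "W \<in> carrier_mat l l" unfolding W_def by (rule mult_carrier_mat[OF adj_carrier[OF Ric] Ric])
  have Meq: "M = kron (1\<^sub>m m) W" unfolding M_def W_def Ri_def by (simp add: minv_RadjR[OF R Rinv])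
  define Phi where "Phi a = (\<Sum>j<l. \<Sum>k<m. (cmod (h k $ j - lam j ^ k * a $ j))^2)" for a
  have obj: "Mnorm M (gv - S *\<^sub>v a) = sqrt (Phi a)" if a: "a \<in> carrier_vec l" for a
  proof -
    define xs where "xs k = g k - (R * Dl k) *\<^sub>v a" for k
    have RDc: "R * Dl k \<in> carrier_mat l l" for k using R Dlc by simp
    have xsc: "xs k \<in> carrier_vec l" if "k < m" for k
      using g[OF that] mult_mat_vec_carrier[OF RDc a] unfolding xs_def by (rule minus_carrier_vec)
    have Sa: "S *\<^sub>v a = stack_vecs m l (\<lambda>k. (R * Dl k) *\<^sub>v a)"
      unfolding S_def Dl_def by (rule stack_mats_mult_vec) (use R a in auto)
    have diff: "gv - S *\<^sub>v a = stack_vecs m l xs"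
      unfolding gv_def Sa xs_def by (rule stack_vecs_minus) (use g mult_mat_vec_carrier[OF RDc a] in auto)
    have Rx: "(Ri *\<^sub>v xs k) $ j = h k $ j - lam j ^ k * a $ j" if k: "k < m" and j: "j < l" for k j
    proof -
      have "Ri *\<^sub>v xs k = Ri *\<^sub>v g k - Ri *\<^sub>v ((R * Dl k) *\<^sub>v a)"
        unfolding xs_def by (rule mult_minus_distrib_mat_vec[OF Ric g[OF k]]) (use mult_mat_vec_carrier[OF RDc a] in auto)
      also have "Ri *\<^sub>v ((R * Dl k) *\<^sub>v a) = (Ri * (R * Dl k)) *\<^sub>v a"
        by (rule assoc_mult_mat_vec[OF Ric RDc a, symmetric])
      also have "Ri * (R * Dl k) = Dl k"
        using assoc_mult_mat[OF Ric R Dlc, of k] RiR left_mult_one_mat[OF Dlc[of k]] by simp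
      finally have "Ri *\<^sub>v xs k = h k - Dl k *\<^sub>v a" by (simp add: h_def)
      moreover have dd: "dim_vec (Dl k *\<^sub>v a) = l" using Dlc[of k] by simp
      ultimately have "(Ri *\<^sub>v xs k) $ j = h k $ j - (Dl k *\<^sub>v a) $ j" using j by simp
      also have "(Dl k *\<^sub>v a) $ j = lam j ^ k * a $ j" unfolding Dl_def by (rule mat_diag_mult_vec_index[OF a j])
      finally show ?thesis .
    qed
    have each: "conjugate (xs k) \<bullet> (W *\<^sub>v xs k) = complex_of_real (\<Sum>j<l. (cmod (h k $ j - lam j ^ k * a $ j))^2)"
      if k: "k < m" for k
    proof -
      have "conjugate (xs k) \<bullet> (W *\<^sub>v xs k) = conjugate (xs k) \<bullet> (adj Ri *\<^sub>v (Ri *\<^sub>v xs k))"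
        unfolding W_def assoc_mult_mat_vec[OF adj_carrier[OF Ric] Ric xsc[OF k]] ..
      also have "\<dots> = conjugate (Ri *\<^sub>v xs k) \<bullet> (Ri *\<^sub>v xs k)"
        by (rule adj_inner[OF Ric xsc[OF k]]) (use Ric xsc[OF k] in simp)
      also have "\<dots> = complex_of_real (\<Sum>j<l. (cmod ((Ri *\<^sub>v xs k) $ j))^2)"
        unfolding conj_self using Ric by simp
      also have "\<dots> = complex_of_real (\<Sum>j<l. (cmod (h k $ j - lam j ^ k * a $ j))^2)"
        using Rx[OF k] by simp
      finally show ?thesis .
    qed
    have "conjugate (gv - S *\<^sub>v a) \<bullet> (M *\<^sub>v (gv - S *\<^sub>v a))
        = conjugate (stack_vecs m l xs) \<bullet> stack_vecs m l (\<lambda>k. W *\<^sub>v xs k)"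
    proof -
      have "kron (1\<^sub>m m) W *\<^sub>v stack_vecs m l xs = stack_vecs m l (\<lambda>k. W *\<^sub>v xs k)"
        by (rule kron_stack) (use Wc xsc in auto)
      then show ?thesis unfolding diff Meq by simp
    qed
    also have "\<dots> = (\<Sum>k<m. conjugate (xs k) \<bullet> (W *\<^sub>v xs k))"
      by (rule stack_inner) (use xsc Wc in auto)
    also have "\<dots> = (\<Sum>k<m. complex_of_real (\<Sum>j<l. (cmod (h k $ j - lam j ^ k * a $ j))^2))"
      using each by simp
    also have "\<dots> = complex_of_real (Phi a)"
      unfolding Phi_def of_real_sum[symmetric] by (simp add: sum.swap[of _ "{..<m}"])
    finally show ?thesis unfolding Mnorm_def by simp
  qed
  show ?thesis
  proof (cases "m = 0")
    case True
    have al0: "alpha = 0\<^sub>v l"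
      unfolding alpha_eq D_def True pinv_Dm_zero by (rule eq_vecI) (auto simp: scalar_prod_def)
    have Mz: "Mnorm M (gv - S *\<^sub>v a) = 0" for a
      unfolding Mnorm_def M_def gv_def True by (simp add: scalar_prod_def)
    show ?thesis using al0 Mz vnorm2_pos vnorm2_zero by auto
  next
    case False
    then have m: "m > 0" by simp
    define c where "c j = cD m lam j" for j
    have cpos: "c j \<ge> 1" for j unfolding c_def by (rule cD_ge1[OF m])
    have cnn: "c j \<ge> 0" for j using cpos[of j] by simp
    have al: "alpha = (mat_diag l (\<lambda>j. complex_of_real (1 / c j)) * adj D) *\<^sub>v stack_vecs m l h"
      unfolding alpha_eq D_def pinv_Dm_pos[OF m] c_def ..
    have alc: "alpha \<in> carrier_vec l" unfolding al D_def
      by (rule mult_mat_vec_carrier[OF mult_carrier_mat[OF mat_diag_dim adj_carrier[OF Dm_carrier]] stack_vecs_carrier])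
    have alj: "alpha $ j = complex_of_real (1 / c j) * (\<Sum>k<m. cnj (lam j ^ k) * h k $ j)" if j: "j < l" for j
    proof -
      have "alpha = mat_diag l (\<lambda>j. complex_of_real (1 / c j)) *\<^sub>v (adj D *\<^sub>v stack_vecs m l h)"
        unfolding al D_def by (rule assoc_mult_mat_vec[OF mat_diag_dim adj_carrier[OF Dm_carrier] stack_vecs_carrier])
      moreover have v: "adj D *\<^sub>v stack_vecs m l h \<in> carrier_vec l" unfolding D_def
        by (rule mult_mat_vec_carrier[OF adj_carrier[OF Dm_carrier] stack_vecs_carrier])
      ultimately have "alpha $ j = complex_of_real (1 / c j) * (adj D *\<^sub>v stack_vecs m l h) $ j"
        using mat_diag_mult_vec_index[OF v j] by simp
      also have "(adj D *\<^sub>v stack_vecs m l h) $ j = (\<Sum>k<m. cnj (lam j ^ k) * h k $ j)"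
        unfolding D_def by (rule adjD_mult_vec[OF hc j])
      finally show ?thesis .
    qed
    have decomp: "Phi a = Phi alpha + (\<Sum>j<l. c j * (cmod (a $ j - alpha $ j))^2)" if a: "a \<in> carrier_vec l" for a
    proof -
      have "(\<Sum>k<m. (cmod (h k $ j - lam j ^ k * a $ j))^2)
          = (\<Sum>k<m. (cmod (h k $ j - lam j ^ k * alpha $ j))^2) + c j * (cmod (a $ j - alpha $ j))^2"
        if j: "j < l" for j
      proof (rule ls_scalar)
        show "c j = (\<Sum>k<m. (cmod (lam j ^ k))^2)" by (simp add: c_def cD_def)
        have "c j \<noteq> 0" using cpos[of j] by simp
        then show "complex_of_real (c j) * alpha $ j = (\<Sum>k<m. cnj (lam j ^ k) * h k $ j)"
          unfolding alj[OF j] by (simp add: of_real_divide)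
      qed
      then show ?thesis unfolding Phi_def by (simp add: sum.distrib)
    qed
    have second: "Mnorm M (gv - S *\<^sub>v alpha) \<le> Mnorm M (gv - S *\<^sub>v a)" if a: "a \<in> carrier_vec l" for a
    proof -
      have "0 \<le> (\<Sum>j<l. c j * (cmod (a $ j - alpha $ j))^2)"
        using cpos by (intro sum_nonneg) (simp add: order_trans[OF zero_le_one])
      then have "Phi alpha \<le> Phi a" using decomp[OF a] by simp
      then show ?thesis unfolding obj[OF a] obj[OF alc] by simp
    qed
    have third: False if b: "b \<in> carrier_vec l" and bmin: "\<forall>a \<in> carrier_vec l. Mnorm M (gv - S *\<^sub>v b) \<le> Mnorm M (gv - S *\<^sub>v a)"
      and ne: "b \<noteq> alpha" for b
    proof -
      obtain j where j: "j < l" "b $ j \<noteq> alpha $ j"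
        using b alc ne by (metis carrier_vecD eq_vecI)
      have "0 < c j * (cmod (b $ j - alpha $ j))^2" using j cpos[of j] by simp
      also have "\<dots> \<le> (\<Sum>j<l. c j * (cmod (b $ j - alpha $ j))^2)"
        by (rule member_le_sum[where f="\<lambda>j. c j * (cmod (b $ j - alpha $ j))^2"])
           (use j cnn in auto)
      finally have "Phi alpha < Phi b" using decomp[OF b] by simp
      moreover have "sqrt (Phi b) \<le> sqrt (Phi alpha)" using bmin alc obj[OF b] obj[OF alc] by auto
      ultimately show False by simp
    qed
    show ?thesis using alc second third by blast
  qed
qed



theorem proposition5p1:
  fixes n l m :: nat
    and A :: "complex mat" and f1 :: "complex vec"
    and z :: "nat \<Rightarrow> complex vec" and Q R :: "complex mat"
    and lam :: "nat \<Rightarrow> complex"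
  assumes A: "A \<in> carrier_mat n n"
    and f1: "f1 \<in> carrier_vec n"
    and z: "\<And>j. j < l \<Longrightarrow> z j \<in> carrier_vec n"
    and indep: "\<And>c. c \<in> carrier_vec l \<Longrightarrow>
                  mat n l (\<lambda>(i,j). z j $ i) *\<^sub>v c = 0\<^sub>v n \<Longrightarrow> c = 0\<^sub>v l"
    and Q: "Q \<in> carrier_mat n l" and Qorth: "adj Q * Q = 1\<^sub>m l"
    and R: "R \<in> carrier_mat l l" and Rut: "upper_triangular R" and Rinv: "invertible_mat R"
    and QR: "mat n l (\<lambda>(i,j). z j $ i) = Q * R"
  defines "gv \<equiv> stack_vecs m l (\<lambda>k. adj Q *\<^sub>v ((A ^\<^sub>m k) *\<^sub>v f1))"
    and "S \<equiv> stack_mats m l l (\<lambda>k. R * mat_diag l (\<lambda>j. lam j ^ k))"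
    and "alpha \<equiv> pinv (stack_mats m l l (\<lambda>k. mat_diag l (\<lambda>j. lam j ^ k)))
                   *\<^sub>v (kron (1\<^sub>m m) (minv R) *\<^sub>v
                        stack_vecs m l (\<lambda>k. adj Q *\<^sub>v ((A ^\<^sub>m k) *\<^sub>v f1)))"
    and "M \<equiv> kron (1\<^sub>m m) (minv (R * adj R))"
  shows "alpha \<in> carrier_vec l
    \<and> (\<forall>a \<in> carrier_vec l. Mnorm M (gv - S *\<^sub>v alpha) \<le> Mnorm M (gv - S *\<^sub>v a))
    \<and> (\<forall>b \<in> carrier_vec l.
         (\<forall>a \<in> carrier_vec l. Mnorm M (gv - S *\<^sub>v b) \<le> Mnorm M (gv - S *\<^sub>v a))
         \<longrightarrow> b \<noteq> alpha \<longrightarrow> vnorm2 alpha < vnorm2 b)"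
  proof -
  have gc: "adj Q *\<^sub>v ((A ^\<^sub>m k) *\<^sub>v f1) \<in> carrier_vec l" if "k < m" for k
    by (rule mult_mat_vec_carrier[OF adj_carrier[OF Q] mult_mat_vec_carrier[OF pow_carrier_mat[OF A] f1]])
  show ?thesis unfolding gv_def S_def alpha_def M_def by (rule core[OF R Rinv gc])
qed

end
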